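(* Suppose that $S\cap(\alpha\times\{b\}\times\{b\})\neq\emptyset$ for all $b\in\alpha$. Let $(\mathcal A,xAByABz)$ be a nanoword over $\alpha$, where $A,B\in\mathcal A$ with $|B|=\tau(|A|)$ and $x,y,z$ are words in $\mathcal A\setminus\{A,B\}$. Then $(\mathcal A,xAByABz)\simeq_S(\mathcal A\setminus\{A,B\},xyz)$.
   Context: Fix a set $\alpha$ with an involution $\tau$ and a subset $S\subset\alpha\times\alpha\times\alpha$. An $\alpha$-alphabet is a set $\mathcal A$ with a map $A\mapsto|A|\in\alpha$. A nanoword over $\alpha$ is a pair $(\mathcal A,w)$ with $\mathcal A$ a finite $\alpha$-alphabet and $w$ a word in which each letter of $\mathcal A$ occurs exactly twice. Nanowords are isomorphic if a bijection of alphabets preserving $|\cdot|$ carries one word letterwise to the other. $S$-homotopy moves ($x,y,z,t$ words in the remaining letters; smaller alphabets carry the restricted projection): (1) $(\mathcal A,xAAy)\mapsto(\mathcal A\setminus\{A\},xy)$; (2) $(\mathcal A,xAByBAz)\mapsto(\mathcal A\setminus\{A,B\},xyz)$ if $|B|=\tau(|A|)$; (3) $(\mathcal A,xAByACzBCt)\mapsto(\mathcal A,xBAyCAzCBt)$ if $A,B,C$ are distinct and $(|A|,|B|,|C|)\in S$. $S$-homotopy $\simeq_S$ is the equivalence relation generated by isomorphisms, these moves and their inverses. *)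

theory Defs
  imports Main
begin

text \<open>A nanoword over alpha (type 'a) with letters of type 'l is represented as a triple
  (Alph, p, w): Alph is the alphabet, p is the projection (only its values on Alph matter),
  w is the word.\<close>

type_synonym ('l, 'a) nanoword = "'l set \<times> ('l \<Rightarrow> 'a) \<times> 'l list"

definition is_nanoword :: "('l, 'a) nanoword \<Rightarrow> bool" where
  "is_nanoword N = (case N of (Alph, p, w) \<Rightarrow>
     finite Alph \<and> set w \<subseteq> Alph \<and> (\<forall>a\<in>Alph. count_list w a = 2))"

definition nano_iso :: "('l, 'a) nanoword \<Rightarrow> ('l, 'a) nanoword \<Rightarrow> bool" where
  "nano_iso N M = (case N of (Alph, p, w) \<Rightarrow> case M of (Alph', p', w') \<Rightarrow>
     is_nanoword N \<and> is_nanoword M \<and>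
     (\<exists>f. bij_betw f Alph Alph' \<and> (\<forall>a\<in>Alph. p' (f a) = p a) \<and> w' = map f w))"

inductive nano_move :: "('a \<Rightarrow> 'a) \<Rightarrow> ('a \<times> 'a \<times> 'a) set
      \<Rightarrow> ('l, 'a) nanoword \<Rightarrow> ('l, 'a) nanoword \<Rightarrow> bool"
  for \<tau> :: "'a \<Rightarrow> 'a" and S :: "('a \<times> 'a \<times> 'a) set" where
  move1: "is_nanoword (Alph, p, x @ [A, A] @ y) \<Longrightarrow>
      nano_move \<tau> S (Alph, p, x @ [A, A] @ y) (Alph - {A}, p, x @ y)"
| move2: "is_nanoword (Alph, p, x @ [A, B] @ y @ [B, A] @ z) \<Longrightarrow> A \<noteq> B \<Longrightarrow>
      p B = \<tau> (p A) \<Longrightarrow>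
      nano_move \<tau> S (Alph, p, x @ [A, B] @ y @ [B, A] @ z) (Alph - {A, B}, p, x @ y @ z)"
| move3: "is_nanoword (Alph, p, x @ [A, B] @ y @ [A, C] @ z @ [B, C] @ t) \<Longrightarrow>
      distinct [A, B, C] \<Longrightarrow> (p A, p B, p C) \<in> S \<Longrightarrow>
      nano_move \<tau> S (Alph, p, x @ [A, B] @ y @ [A, C] @ z @ [B, C] @ t)
                     (Alph, p, x @ [B, A] @ y @ [C, A] @ z @ [C, B] @ t)"

definition S_homotopic :: "('a \<Rightarrow> 'a) \<Rightarrow> ('a \<times> 'a \<times> 'a) set
      \<Rightarrow> ('l, 'a) nanoword \<Rightarrow> ('l, 'a) nanoword \<Rightarrow> bool" where
  "S_homotopic \<tau> S = (symclp (\<lambda>N M. nano_iso N M \<or> nano_move \<tau> S N M))\<^sup>*\<^sup>*"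

end

theory Submission
  imports Defs
begin

lemma hom_fwd: "nano_move \<tau> S N M \<Longrightarrow> S_homotopic \<tau> S N M"
  unfolding S_homotopic_def by (rule r_into_rtranclp) (simp add: symclp_def)

lemma hom_bwd: "nano_move \<tau> S M N \<Longrightarrow> S_homotopic \<tau> S N M"
  unfolding S_homotopic_def by (rule r_into_rtranclp) (simp add: symclp_def)

lemma hom_iso: "nano_iso N M \<Longrightarrow> S_homotopic \<tau> S N M"
  unfolding S_homotopic_def by (rule r_into_rtranclp) (simp add: symclp_def)

lemma hom_trans: "S_homotopic \<tau> S N M \<Longrightarrow> S_homotopic \<tau> S M K \<Longrightarrow> S_homotopic \<tau> S N K"
  unfolding S_homotopic_def by (rule rtranclp_trans)

theorem lemma3p2:
  fixes \<tau> :: "'a \<Rightarrow> 'a" and S :: "('a \<times> 'a \<times> 'a) set"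
    and Alph :: "'l set" and p :: "'l \<Rightarrow> 'a" and A B :: 'l and x y z :: "'l list"
  assumes letters_infinite: "infinite (UNIV :: 'l set)"
    and involution: "\<And>a. \<tau> (\<tau> a) = a"
    and hS: "\<And>b. \<exists>a. (a, b, b) \<in> S"
    and nw: "is_nanoword (Alph, p, x @ [A, B] @ y @ [A, B] @ z)"
    and AB: "A \<in> Alph" "B \<in> Alph" "A \<noteq> B"
    and tauAB: "p B = \<tau> (p A)"
    and xyz: "set x \<union> set y \<union> set z \<subseteq> Alph - {A, B}"
  shows "S_homotopic \<tau> S (Alph, p, x @ [A, B] @ y @ [A, B] @ z) (Alph - {A, B}, p, x @ y @ z)"
proof -
  have fin: "finite Alph" using nw by (simp add: is_nanoword_def)
  have cnt: "\<And>a. a \<in> Alph \<Longrightarrow> count_list (x @ [A, B] @ y @ [A, B] @ z) a = 2"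
    using nw by (simp add: is_nanoword_def)
  have cxyz: "\<And>a. a \<in> Alph \<Longrightarrow> a \<noteq> A \<Longrightarrow> a \<noteq> B \<Longrightarrow> count_list x a + count_list y a + count_list z a = 2"
  proof -
    fix a assume h: "a \<in> Alph" "a \<noteq> A" "a \<noteq> B"
    have "count_list (x @ [A, B] @ y @ [A, B] @ z) a = count_list x a + count_list y a + count_list z a"
      using h by simp
    then show "count_list x a + count_list y a + count_list z a = 2" using cnt[OF h(1)] by simp
  qed
  have nA: "A \<notin> set x" "A \<notin> set y" "A \<notin> set z" "B \<notin> set x" "B \<notin> set y" "B \<notin> set z"
    using xyz by auto
  obtain c where c: "(c, p B, p B) \<in> S" using hS by blast
  obtain C where C: "C \<notin> Alph" using ex_new_if_finite[OF letters_infinite fin] by blast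
  obtain D where D: "D \<notin> Alph \<union> {C}" using ex_new_if_finite[OF letters_infinite, of "Alph \<union> {C}"] fin by auto
  obtain E where E: "E \<notin> Alph \<union> {C, D}" using ex_new_if_finite[OF letters_infinite, of "Alph \<union> {C, D}"] fin by auto
  obtain F where F: "F \<notin> Alph \<union> {C, D, E}" using ex_new_if_finite[OF letters_infinite, of "Alph \<union> {C, D, E}"] fin by auto
  have nC: "C \<notin> set x" "C \<notin> set y" "C \<notin> set z" "D \<notin> set x" "D \<notin> set y" "D \<notin> set z"
    "E \<notin> set x" "E \<notin> set y" "E \<notin> set z" "F \<notin> set x" "F \<notin> set y" "F \<notin> set z"
    using xyz C D E F by auto
  have dist: "C \<noteq> A" "C \<noteq> B" "D \<noteq> A" "D \<noteq> B" "E \<noteq> A" "E \<noteq> B" "F \<noteq> A" "F \<noteq> B"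
    "D \<noteq> C" "E \<noteq> C" "E \<noteq> D" "F \<noteq> C" "F \<noteq> D" "F \<noteq> E"
    using AB C D E F by auto
  have cnt0: "\<And>a l. a \<notin> set l \<Longrightarrow> count_list l a = 0"
    by (simp add: count_list_0_iff)
  define q where "q = p(C := \<tau> c, D := c, E := p A, F := p B)"
  have qA: "q A = p A" and qB: "q B = p B" and qC: "q C = \<tau> c" and qD: "q D = c"
    and qE: "q E = p A" and qF: "q F = p B"
    using dist by (auto simp: q_def)
  define A1 where "A1 = Alph \<union> {C, D, E, F}"
  have finA1: "finite A1" using fin by (simp add: A1_def)
  have setx: "set x \<subseteq> Alph" "set y \<subseteq> Alph" "set z \<subseteq> Alph" using xyz by auto
  let ?W0 = "x @ [A, B] @ y @ [A, B] @ z"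
  let ?W1 = "x @ [C, D] @ [A, B] @ [D, C] @ (y @ [A, B] @ z)"
  let ?W2 = "(x @ [C]) @ [E, F] @ ([D, A, B, D, C] @ y @ [A, B]) @ [F, E] @ z"
  let ?W3 = "(x @ [C, E]) @ [D, F] @ [A] @ [D, B] @ ([C] @ y @ [A]) @ [F, B] @ ([E] @ z)"
  let ?W3' = "(x @ [C, E, D]) @ [F, A] @ ([D, B, C] @ y) @ [A, F] @ ([B, E] @ z)"
  let ?W4 = "(x @ [C, E]) @ [D, D] @ ([B, C] @ y @ [B, E] @ z)"
  let ?W5 = "(x @ [C]) @ [E, B] @ ([C] @ y) @ [B, E] @ z"
  let ?W6 = "x @ [C, C] @ (y @ z)"
  have key: "\<And>a. a \<in> Alph \<Longrightarrow> a \<noteq> A \<Longrightarrow> a \<noteq> B \<Longrightarrow> count_list x a + (count_list y a + count_list z a) = 2"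
    using cxyz by (simp add: add.assoc)
  have z0: "count_list x A = 0" "count_list y A = 0" "count_list z A = 0"
    "count_list x B = 0" "count_list y B = 0" "count_list z B = 0"
    "count_list x C = 0" "count_list y C = 0" "count_list z C = 0"
    "count_list x D = 0" "count_list y D = 0" "count_list z D = 0"
    "count_list x E = 0" "count_list y E = 0" "count_list z E = 0"
    "count_list x F = 0" "count_list y F = 0" "count_list z F = 0"
    using nA nC by (simp_all add: count_list_0_iff)
  have altE: "\<And>a P. a \<in> Alph \<Longrightarrow> (a = A \<Longrightarrow> P) \<Longrightarrow> (a = B \<Longrightarrow> P) \<Longrightarrow>
      (a \<noteq> A \<Longrightarrow> a \<noteq> B \<Longrightarrow> a \<noteq> C \<Longrightarrow> a \<noteq> D \<Longrightarrow> a \<noteq> E \<Longrightarrow> a \<noteq> F \<Longrightarrow> count_list x a + (count_list y a + count_list z a) = 2 \<Longrightarrow> P) \<Longrightarrow> P"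
    using C D E F key by blast
  have qp: "\<And>a. a \<in> Alph \<Longrightarrow> q a = p a" using C D E F by (auto simp: q_def)
  have iso0: "nano_iso (Alph, p, ?W0) (Alph, q, ?W0)"
    unfolding nano_iso_def using nw
    using qp by (auto simp: is_nanoword_def intro!: exI[of _ id])
  have "is_nanoword (Alph \<union> {C, D}, q, ?W1)"
    unfolding is_nanoword_def case_prod_conv apply (intro conjI)
    subgoal using fin by simp
    subgoal using xyz AB C D E F by auto
    subgoal using AB dist by (auto simp: z0 elim!: altE)
    done
  then have m1: "nano_move \<tau> S (Alph \<union> {C, D}, q, ?W1) ((Alph \<union> {C, D}) - {C, D}, q, x @ [A, B] @ (y @ [A, B] @ z))"
    using nano_move.move2[of "Alph \<union> {C, D}" q x C D "[A, B]" "y @ [A, B] @ z" \<tau> S] dist qC qD involution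
    by simp
  have e1: "(Alph \<union> {C, D}) - {C, D} = Alph" using C D by auto
  have "is_nanoword (Alph \<union> {C, D} \<union> {E, F}, q, ?W2)"
    unfolding is_nanoword_def case_prod_conv apply (intro conjI)
    subgoal using fin by simp
    subgoal using xyz AB C D E F by auto
    subgoal using AB dist by (auto simp: z0 elim!: altE)
    done
  then have m2: "nano_move \<tau> S (Alph \<union> {C, D} \<union> {E, F}, q, ?W2) ((Alph \<union> {C, D} \<union> {E, F}) - {E, F}, q, (x @ [C]) @ ([D, A, B, D, C] @ y @ [A, B]) @ z)"
    using nano_move.move2[of "Alph \<union> {C, D} \<union> {E, F}" q "x @ [C]" E F "[D, A, B, D, C] @ y @ [A, B]" z \<tau> S] dist qE qF tauAB
    by simp
  have e2: "(Alph \<union> {C, D} \<union> {E, F}) - {E, F} = Alph \<union> {C, D}" using C D E F by auto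
  have "is_nanoword (Alph \<union> {C, D} \<union> {E, F}, q, ?W3)"
    unfolding is_nanoword_def case_prod_conv apply (intro conjI)
    subgoal using fin by simp
    subgoal using xyz AB C D E F by auto
    subgoal using AB dist by (auto simp: z0 elim!: altE)
    done
  then have m3: "nano_move \<tau> S (Alph \<union> {C, D} \<union> {E, F}, q, ?W3) (Alph \<union> {C, D} \<union> {E, F}, q, (x @ [C, E]) @ [F, D] @ [A] @ [B, D] @ ([C] @ y @ [A]) @ [B, F] @ ([E] @ z))"
    using nano_move.move3[of "Alph \<union> {C, D} \<union> {E, F}" q "x @ [C, E]" D F "[A]" B "[C] @ y @ [A]" "[E] @ z" S \<tau>] dist qD qF qB c
    by simp
  have "is_nanoword (Alph \<union> {C, D} \<union> {E, F}, q, ?W3')"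
    unfolding is_nanoword_def case_prod_conv apply (intro conjI)
    subgoal using fin by simp
    subgoal using xyz AB C D E F by auto
    subgoal using AB dist by (auto simp: z0 elim!: altE)
    done
  then have m4: "nano_move \<tau> S (Alph \<union> {C, D} \<union> {E, F}, q, ?W3') ((Alph \<union> {C, D} \<union> {E, F}) - {F, A}, q, (x @ [C, E, D]) @ ([D, B, C] @ y) @ ([B, E] @ z))"
    using nano_move.move2[of "Alph \<union> {C, D} \<union> {E, F}" q "x @ [C, E, D]" F A "[D, B, C] @ y" "[B, E] @ z" \<tau> S] dist qA qF tauAB involution
    by simp
  have "is_nanoword ((Alph \<union> {C, D} \<union> {E, F}) - {F, A}, q, ?W4)"
    unfolding is_nanoword_def case_prod_conv apply (intro conjI)
    subgoal using fin by simp
    subgoal using xyz AB C D E F by auto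
    subgoal using AB dist by (auto simp: z0 elim!: altE)
    done
  then have m5: "nano_move \<tau> S ((Alph \<union> {C, D} \<union> {E, F}) - {F, A}, q, ?W4) ((Alph \<union> {C, D} \<union> {E, F}) - {F, A} - {D}, q, (x @ [C, E]) @ ([B, C] @ y @ [B, E] @ z))"
    using nano_move.move1[of "(Alph \<union> {C, D} \<union> {E, F}) - {F, A}" q "x @ [C, E]" D "[B, C] @ y @ [B, E] @ z" \<tau> S]
    by simp
  have "is_nanoword ((Alph \<union> {C, D} \<union> {E, F}) - {F, A} - {D}, q, ?W5)"
    unfolding is_nanoword_def case_prod_conv apply (intro conjI)
    subgoal using fin by simp
    subgoal using xyz AB C D E F by auto
    subgoal using AB dist by (auto simp: z0 elim!: altE)
    done
  then have m6: "nano_move \<tau> S ((Alph \<union> {C, D} \<union> {E, F}) - {F, A} - {D}, q, ?W5) ((Alph \<union> {C, D} \<union> {E, F}) - {F, A} - {D} - {E, B}, q, (x @ [C]) @ ([C] @ y) @ z)"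
    using nano_move.move2[of "(Alph \<union> {C, D} \<union> {E, F}) - {F, A} - {D}" q "x @ [C]" E B "[C] @ y" z \<tau> S] dist qE qB tauAB
    by simp
  have "is_nanoword ((Alph \<union> {C, D} \<union> {E, F}) - {F, A} - {D} - {E, B}, q, ?W6)"
    unfolding is_nanoword_def case_prod_conv apply (intro conjI)
    subgoal using fin by simp
    subgoal using xyz AB C D E F by auto
    subgoal using AB dist by (auto simp: z0 elim!: altE)
    done
  then have m7: "nano_move \<tau> S ((Alph \<union> {C, D} \<union> {E, F}) - {F, A} - {D} - {E, B}, q, ?W6) ((Alph \<union> {C, D} \<union> {E, F}) - {F, A} - {D} - {E, B} - {C}, q, x @ (y @ z))"
    using nano_move.move1[of "(Alph \<union> {C, D} \<union> {E, F}) - {F, A} - {D} - {E, B}" q x C "y @ z" \<tau> S]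
    by simp
  have e7: "(Alph \<union> {C, D} \<union> {E, F}) - {F, A} - {D} - {E, B} - {C} = Alph - {A, B}"
    using C D E F by auto
  have "is_nanoword (Alph - {A, B}, p, x @ y @ z)"
    unfolding is_nanoword_def case_prod_conv apply (intro conjI)
    subgoal using fin by simp
    subgoal using xyz AB C D E F by auto
    subgoal using AB dist by (auto simp: z0 elim!: altE)
    done
  then have iso7: "nano_iso (Alph - {A, B}, q, x @ y @ z) (Alph - {A, B}, p, x @ y @ z)"
    unfolding nano_iso_def
    using qp by (auto simp: is_nanoword_def intro!: exI[of _ id])
  have h1: "S_homotopic \<tau> S (Alph, q, ?W0) (Alph \<union> {C, D}, q, ?W1)"
    using hom_bwd[OF m1] e1 by simp
  have h2: "S_homotopic \<tau> S (Alph \<union> {C, D}, q, ?W1) (Alph \<union> {C, D} \<union> {E, F}, q, ?W2)"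
    using hom_bwd[OF m2] e2 by simp
  have h3: "S_homotopic \<tau> S (Alph \<union> {C, D} \<union> {E, F}, q, ?W2) (Alph \<union> {C, D} \<union> {E, F}, q, ?W3)"
    using hom_bwd[OF m3] by simp
  have h4: "S_homotopic \<tau> S (Alph \<union> {C, D} \<union> {E, F}, q, ?W3) ((Alph \<union> {C, D} \<union> {E, F}) - {F, A}, q, ?W4)"
    using hom_fwd[OF m4] by simp
  have h5: "S_homotopic \<tau> S ((Alph \<union> {C, D} \<union> {E, F}) - {F, A}, q, ?W4) ((Alph \<union> {C, D} \<union> {E, F}) - {F, A} - {D}, q, ?W5)"
    using hom_fwd[OF m5] by simp
  have h6: "S_homotopic \<tau> S ((Alph \<union> {C, D} \<union> {E, F}) - {F, A} - {D}, q, ?W5) ((Alph \<union> {C, D} \<union> {E, F}) - {F, A} - {D} - {E, B}, q, ?W6)"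
    using hom_fwd[OF m6] by simp
  have h7: "S_homotopic \<tau> S ((Alph \<union> {C, D} \<union> {E, F}) - {F, A} - {D} - {E, B}, q, ?W6) (Alph - {A, B}, q, x @ y @ z)"
    using hom_fwd[OF m7] e7 by simp
  show ?thesis
    by (rule hom_trans[OF hom_iso[OF iso0] hom_trans[OF h1 hom_trans[OF h2 hom_trans[OF h3
        hom_trans[OF h4 hom_trans[OF h5 hom_trans[OF h6 hom_trans[OF h7 hom_iso[OF iso7]]]]]]]]])
qed

end
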